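(* Consider a generic device in the steady state of the frame-slotted system described in the context, with $M\ge 1$ slots per frame, harvesting probability $\eta\in[0,1]$, maximum degree $\ell_{\max}$, conditional degree distribution $\{\Lambda_{\ell,b}\}$ and steady-state initial battery distribution $\phi=(\phi_0,\dots,\phi_E)$. Then the packet loss rate $P_e$ satisfies $P_e\ge \underline{P_e}$, where $$\underline{P_e}=\phi_0\left(\sum_{y=1}^{M}\eta(1-\eta)^{y-1}\sum_{\ell=0}^{\ell_{\max}}\Lambda_{\ell,0}\,\frac{(y-1)!\,(M-\ell)!}{(y-\ell-1)!\,M!}+(1-\eta)^M\right),$$ with the convention that the factor $\frac{(y-1)!}{(y-\ell-1)!}$ equals $0$ whenever $\ell>y-1$ (so the degree-$0$ term has ratio equal to $1$).
   Context: Time is slotted and grouped into frames of $M$ slots. Each device has a battery of capacity $E$ energy units; each packet (replica) transmission consumes one energy unit. In each slot, independently across slots and devices, a device harvests one energy unit with probability $\eta$ (harvesting pauses when the battery is full); an energy unit harvested in slot $y$ of a frame can be used for a transmission in slot $y$ or later. The initial battery level $B\in\{0,\dots,E\}$ of a device is its battery level at the beginning of a frame; at steady state $\mathbb{P}[B=b]=\phi_b$, and whether a device is active (has an update to send) in a frame is independent of $B$. An active device with initial battery level $b$ draws a degree $L$ with $\mathbb{P}[L=\ell\mid B=b]=\Lambda_{\ell,b}$, $\ell\in\{0,\dots,\ell_{\max}\}$, and then chooses $L$ distinct slots of the frame uniformly at random without replacement (independently of the harvesting process) as the intended positions of $L$ identical replicas of its update. A replica is actually transmitted only if the device has at least one energy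 unit available in that slot; otherwise it is dropped. Degree $0$ means the update is discarded. The packet loss rate $P_e$ is the steady-state probability that the update of an active device in a frame is not successfully decoded by the receiver (in particular, it is lost if the degree is $0$ or if all its intended replicas are dropped). *)

theory Defs
  imports "HOL-Probability.Probability"
begin

(* Outcome of one active device in one frame:
   (initial battery B, degree L, set S of chosen slots in {1..M}, harvest coins H),
   where H y = True means a unit of energy arrives in slot y (if battery not full). *)
type_synonym dev_outcome = "nat \<times> nat \<times> nat set \<times> (nat \<Rightarrow> bool)"

definition device_pmf ::
  "nat \<Rightarrow> real \<Rightarrow> nat pmf \<Rightarrow> (nat \<Rightarrow> nat pmf) \<Rightarrow> dev_outcome pmf" where
  "device_pmf M \<eta> phi Lam =
     bind_pmf phi (\<lambda>b.
     bind_pmf (Lam b) (\<lambda>l.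
     bind_pmf (pmf_of_set {S. S \<subseteq> {1..M} \<and> card S = l}) (\<lambda>S.
     bind_pmf (Pi_pmf {1..M} False (\<lambda>_. bernoulli_pmf \<eta>)) (\<lambda>H.
     return_pmf (b, l, S, H)))))"

(* energy available in slot y (after the harvest of slot y, before transmitting)
   and battery level at the end of slot y; slot 0 = beginning of frame *)
fun batt_end :: "nat \<Rightarrow> nat \<Rightarrow> nat set \<Rightarrow> (nat \<Rightarrow> bool) \<Rightarrow> nat \<Rightarrow> nat" where
  "batt_end E b S H 0 = b"
| "batt_end E b S H (Suc y) =
     (let h = (if H (Suc y) \<and> batt_end E b S H y < E then batt_end E b S H y + 1
               else batt_end E b S H y)
      in if Suc y \<in> S \<and> 1 \<le> h then h - 1 else h)"

definition avail :: "nat \<Rightarrow> nat \<Rightarrow> nat set \<Rightarrow> (nat \<Rightarrow> bool) \<Rightarrow> nat \<Rightarrow> nat" where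
  "avail E b S H y =
     (if H y \<and> batt_end E b S H (y - 1) < E then batt_end E b S H (y - 1) + 1
      else batt_end E b S H (y - 1))"

definition transmitted :: "nat \<Rightarrow> nat \<Rightarrow> dev_outcome \<Rightarrow> nat set" where
  "transmitted E M x = (case x of (b, l, S, H) \<Rightarrow>
     {y \<in> S. 1 \<le> y \<and> y \<le> M \<and> 1 \<le> avail E b S H y})"

definition ratio :: "nat \<Rightarrow> nat \<Rightarrow> nat \<Rightarrow> real" where
  "ratio M y l = (if l \<le> y - 1
     then fact (y - 1) * fact (M - l) / (fact (y - 1 - l) * fact M) else 0)"

definition Pe_lower :: "nat \<Rightarrow> real \<Rightarrow> nat \<Rightarrow> nat pmf \<Rightarrow> (nat \<Rightarrow> nat pmf) \<Rightarrow> real" where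
  "Pe_lower M \<eta> lmax phi Lam =
     pmf phi 0 * ((\<Sum>y=1..M. \<eta> * (1 - \<eta>) ^ (y - 1) *
                      (\<Sum>l=0..lmax. pmf (Lam 0) l * ratio M y l))
                  + (1 - \<eta>) ^ M)"

end

theory Submission
  imports Defs
begin
lemma measure_eq_on_set: "A \<inter> set_pmf p = B \<inter> set_pmf p \<Longrightarrow> measure_pmf.prob p A = measure_pmf.prob p B"
  by (metis measure_Int_set_pmf)
lemma bern: fixes \<eta>::real assumes "0 \<le> \<eta>" "\<eta> \<le> 1"
  shows "measure_pmf.prob (bernoulli_pmf \<eta>) {False} = 1 - \<eta>" "measure_pmf.prob (bernoulli_pmf \<eta>) {True} = \<eta>"
   "measure_pmf.prob (bernoulli_pmf \<eta>) UNIV = 1"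
  using assms by (simp_all add: measure_pmf_single)
lemma prodc:
  fixes \<eta> :: real
  assumes "y \<in> {1..M}"
  shows "(\<Prod>z\<in>{1..M}. if z < y then 1 - \<eta> else if z = y then \<eta> else 1) = \<eta> * (1 - \<eta>) ^ (y - 1)"
proof -
  have e: "{1..M} = insert y ({1..<y} \<union> {y<..M})" using assms by auto
  have "(\<Prod>z\<in>{1..M}. if z < y then 1 - \<eta> else if z = y then \<eta> else 1)
     = \<eta> * ((\<Prod>z\<in>{1..<y}. if z < y then 1 - \<eta> else if z = y then \<eta> else 1) *
              (\<Prod>z\<in>{y<..M}. if z < y then 1 - \<eta> else if z = y then \<eta> else 1))"
    unfolding e
    apply (subst prod.insert)
      apply simp
     apply simp
    apply (subst prod.union_disjoint)
       apply simp
      apply simp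
     apply fastforce
    apply (simp only: less_irrefl if_False if_True simp_thms)
    done
  also have "(\<Prod>z\<in>{1..<y}. if z < y then 1 - \<eta> else if z = y then \<eta> else 1) = (\<Prod>z\<in>{1..<y}. 1 - \<eta>)"
    by (rule prod.cong) auto
  also have "(\<Prod>z\<in>{y<..M}. if z < y then 1 - \<eta> else if z = y then \<eta> else 1) = (\<Prod>z\<in>{y<..M}. 1)"
    by (rule prod.cong) auto
  finally show ?thesis by simp
qed

lemma Pi_first:
  fixes \<eta> :: real and M y :: nat
  assumes "0 \<le> \<eta>" "\<eta> \<le> 1" "y \<in> {1..M}"
  shows "measure_pmf.prob (Pi_pmf {1..M} False (\<lambda>_. bernoulli_pmf \<eta>))
           {H. H y \<and> (\<forall>z\<in>{1..<y}. \<not> H z)} = \<eta> * (1 - \<eta>) ^ (y - 1)"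
proof -
  let ?P = "Pi_pmf {1..M} False (\<lambda>_. bernoulli_pmf \<eta>)"
  define B where "B = (\<lambda>z::nat. if z < y then {False} else if z = y then {True} else (UNIV::bool set))"
  have "{H. H y \<and> (\<forall>z\<in>{1..<y}. \<not> H z)} \<inter> set_pmf ?P = PiE_dflt {1..M} False B \<inter> set_pmf ?P"
  proof -
    have out: "\<And>H z. H \<in> set_pmf ?P \<Longrightarrow> z \<notin> {1..M} \<Longrightarrow> \<not> H z"
      using set_Pi_pmf_subset[of "{1..M}" False "\<lambda>_. bernoulli_pmf \<eta>"] by auto
    show ?thesis
    proof (intro equalityI subsetI)
      fix H assume H: "H \<in> {H. H y \<and> (\<forall>z\<in>{1..<y}. \<not> H z)} \<inter> set_pmf ?P"
      have nz: "\<not> H z" if "z < y" for z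
      proof (cases "z \<ge> 1")
        case True thus ?thesis using H that by simp
      next
        case False thus ?thesis using out[of H z] H by simp
      qed
      have "H \<in> PiE_dflt {1..M} False B"
        unfolding PiE_dflt_def
      proof (intro CollectI allI conjI impI)
        fix x assume "x \<in> {1..M}" thus "H x \<in> B x" using nz H unfolding B_def by simp
      next
        fix x assume "x \<notin> {1..M}" thus "H x = False" using out[of H x] H by simp
      qed
      then show "H \<in> PiE_dflt {1..M} False B \<inter> set_pmf ?P" using H by simp
    next
      fix H assume H: "H \<in> PiE_dflt {1..M} False B \<inter> set_pmf ?P"
      hence HB: "\<And>x. x \<in> {1..M} \<Longrightarrow> H x \<in> B x" unfolding PiE_dflt_def by blast
      have "H y" using HB[of y] assms(3) unfolding B_def by simp
      moreover have "\<not> H z" if "z \<in> {1..<y}" for z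
        using HB[of z] that assms(3) unfolding B_def by simp
      ultimately show "H \<in> {H. H y \<and> (\<forall>z\<in>{1..<y}. \<not> H z)} \<inter> set_pmf ?P"
        using H by blast
    qed
  qed
  hence "measure_pmf.prob ?P {H. H y \<and> (\<forall>z\<in>{1..<y}. \<not> H z)} = measure_pmf.prob ?P (PiE_dflt {1..M} False B)"
    by (rule measure_eq_on_set)
  also have "\<dots> = (\<Prod>z\<in>{1..M}. measure_pmf.prob (bernoulli_pmf \<eta>) (B z))"
    by (rule measure_Pi_pmf_PiE_dflt) simp
  also have "\<dots> = (\<Prod>z\<in>{1..M}. if z < y then 1 - \<eta> else if z = y then \<eta> else 1)"
    by (rule prod.cong[OF refl]) (simp add: B_def bern[OF assms(1,2)])
  also have "\<dots> = \<eta> * (1 - \<eta>) ^ (y - 1)" using prodc[OF assms(3)] .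
  finally show ?thesis .
qed

lemma Pi_none:
  fixes \<eta> :: real and M :: nat
  assumes "0 \<le> \<eta>" "\<eta> \<le> 1"
  shows "measure_pmf.prob (Pi_pmf {1..M} False (\<lambda>_. bernoulli_pmf \<eta>))
           {H. \<forall>z\<in>{1..M}. \<not> H z} = (1 - \<eta>) ^ M"
proof -
  let ?P = "Pi_pmf {1..M} False (\<lambda>_. bernoulli_pmf \<eta>)"
  define B where "B = (\<lambda>z::nat. {False})"
  have "{H. \<forall>z\<in>{1..M}. \<not> H z} \<inter> set_pmf ?P = PiE_dflt {1..M} False B \<inter> set_pmf ?P"
    using set_Pi_pmf_subset[of "{1..M}" False "\<lambda>_. bernoulli_pmf \<eta>"]
    by (auto simp: PiE_dflt_def B_def)
  hence "measure_pmf.prob ?P {H. \<forall>z\<in>{1..M}. \<not> H z} = measure_pmf.prob ?P (PiE_dflt {1..M} False B)"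
    by (rule measure_eq_on_set)
  also have "\<dots> = (\<Prod>z\<in>{1..M}. measure_pmf.prob (bernoulli_pmf \<eta>) (B z))"
    by (rule measure_Pi_pmf_PiE_dflt) simp
  also have "\<dots> = (1 - \<eta>) ^ M"
    by (simp add: B_def bern[OF assms(1,2)])
  finally show ?thesis .
qed

lemma ratio_choose:
  assumes "1 \<le> y" "y \<le> M" "l \<le> M"
  shows "real ((y - 1) choose l) / real (M choose l) = (if l \<le> y - 1
     then fact (y - 1) * fact (M - l) / (fact (y - 1 - l) * fact M) else 0)"
proof (cases "l \<le> y - 1")
  case True
  have a: "real ((y - 1) choose l) = fact (y-1) / (fact l * fact (y - 1 - l))" using True binomial_fact by blast
  have b: "real (M choose l) = fact M / (fact l * fact (M - l))" using assms binomial_fact by blast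
  show ?thesis using True unfolding a b by (simp add: divide_simps)
next
  case False then show ?thesis by simp
qed

lemma measure_bind_pmf_int: "measure_pmf.prob (bind_pmf p f) A = (\<integral>x. measure_pmf.prob (f x) A \<partial>p)"
  unfolding measure_pmf_bind
  by (subst measure_pmf.measure_bind[where N="count_space UNIV"])
     (auto simp: space_subprob_algebra measure_pmf_in_subprob_algebra
           intro: prob_space_imp_subprob_space measure_pmf.prob_space_axioms)

lemma batt_zero: "(\<forall>z\<in>{1..y}. \<not> H z) \<Longrightarrow> batt_end E 0 S H y = 0"
  by (induction y) (auto simp: Let_def)

lemma avail_zero: "1 \<le> y \<Longrightarrow> (\<forall>z\<in>{1..y}. \<not> H z) \<Longrightarrow> avail E 0 S H y = 0"
proof -
  assume a: "1 \<le> y" "\<forall>z\<in>{1..y}. \<not> H z"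
  hence "\<forall>z\<in>{1..y-1}. \<not> H z" by auto
  hence "batt_end E 0 S H (y - 1) = 0" by (rule batt_zero)
  thus ?thesis using a unfolding avail_def by auto
qed

definition goodS :: "nat \<Rightarrow> nat set \<Rightarrow> (nat \<Rightarrow> bool) \<Rightarrow> bool" where
  "goodS M S H = ((\<forall>z\<in>{1..M}. \<not> H z) \<or> (\<exists>y\<in>{1..M}. H y \<and> (\<forall>z\<in>{1..<y}. \<not> H z) \<and> S \<subseteq> {1..<y}))"

lemma good_transmitted:
  assumes "goodS M S H"
  shows "transmitted E M (0, l, S, H) = {}"
proof -
  have "avail E 0 S H t = 0" if "t \<in> S" "1 \<le> t" "t \<le> M" for t
  proof -
    from assms consider (a) "\<forall>z\<in>{1..M}. \<not> H z"
      | (b) y where "y \<in> {1..M}" "\<forall>z\<in>{1..<y}. \<not> H z" "S \<subseteq> {1..<y}"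
      unfolding goodS_def by blast
    then show ?thesis
    proof cases
      case a thus ?thesis using that by (intro avail_zero) auto
    next
      case b
      hence "t < y" using that by auto
      thus ?thesis using that b by (intro avail_zero) auto
    qed
  qed
  thus ?thesis unfolding transmitted_def by auto
qed

lemma measure_good:
  fixes \<eta> :: real
  assumes "0 \<le> \<eta>" "\<eta> \<le> 1"
  shows "measure_pmf.prob (Pi_pmf {1..M} False (\<lambda>_. bernoulli_pmf \<eta>)) {H. goodS M S H}
     = (\<Sum>y=1..M. if S \<subseteq> {1..<y} then \<eta> * (1 - \<eta>) ^ (y - 1) else 0) + (1 - \<eta>) ^ M"
proof -
  let ?P = "Pi_pmf {1..M} False (\<lambda>_. bernoulli_pmf \<eta>)"
  define I where "I = {y\<in>{1..M}. S \<subseteq> {1..<y}}"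
  define A where "A = (\<lambda>y::nat. {H::nat\<Rightarrow>bool. H y \<and> (\<forall>z\<in>{1..<y}. \<not> H z)})"
  define A0 where "A0 = {H::nat\<Rightarrow>bool. \<forall>z\<in>{1..M}. \<not> H z}"
  have eq: "{H. goodS M S H} = A0 \<union> (\<Union>y\<in>I. A y)"
    unfolding goodS_def A0_def A_def I_def by blast
  have disj: "A0 \<inter> (\<Union>y\<in>I. A y) = {}"
    unfolding A0_def A_def I_def by auto
  have dfam: "disjoint_family_on A I"
    unfolding disjoint_family_on_def
  proof (intro ballI impI)
    fix m n assume mn: "m \<in> I" "n \<in> I" "m \<noteq> n"
    show "A m \<inter> A n = {}"
    proof (cases "m < n")
      case True thus ?thesis using mn unfolding A_def I_def by auto
    next
      case False hence "n < m" using mn by simp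
      thus ?thesis using mn unfolding A_def I_def by auto
    qed
  qed
  have "measure_pmf.prob ?P {H. goodS M S H} = measure_pmf.prob ?P A0 + measure_pmf.prob ?P (\<Union>y\<in>I. A y)"
    unfolding eq by (rule measure_pmf.finite_measure_Union) (use disj in auto)
  also have "measure_pmf.prob ?P (\<Union>y\<in>I. A y) = (\<Sum>y\<in>I. measure_pmf.prob ?P (A y))"
    by (rule measure_pmf.finite_measure_finite_Union) (use dfam in \<open>auto simp: I_def\<close>)
  also have "\<dots> = (\<Sum>y\<in>I. \<eta> * (1 - \<eta>) ^ (y - 1))"
    by (rule sum.cong[OF refl]) (unfold A_def I_def, rule Pi_first[OF assms], auto)
  also have "\<dots> = (\<Sum>y=1..M. if S \<subseteq> {1..<y} then \<eta> * (1 - \<eta>) ^ (y - 1) else 0)"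
    unfolding I_def by (rule sum.inter_filter) simp
  also have "measure_pmf.prob ?P A0 = (1 - \<eta>) ^ M"
    unfolding A0_def by (rule Pi_none[OF assms])
  finally show ?thesis by simp
qed

lemma measure_l:
  fixes \<eta> :: real
  assumes "0 \<le> \<eta>" "\<eta> \<le> 1" "l \<le> M"
  defines "SS \<equiv> {S. S \<subseteq> {1..M} \<and> card S = l}"
  shows "(\<Sum>S\<in>SS. (\<Sum>y=1..M. if S \<subseteq> {1..<y} then \<eta> * (1 - \<eta>) ^ (y - 1) else 0) + (1 - \<eta>) ^ M) / real (card SS)
     = (\<Sum>y=1..M. \<eta> * (1 - \<eta>) ^ (y - 1) * ratio M y l) + (1 - \<eta>) ^ M"
proof -
  have fin: "finite SS" unfolding SS_def by (rule finite_subset[of _ "Pow {1..M}"]) auto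
  have cSS: "card SS = M choose l" unfolding SS_def using n_subsets[of "{1..M}" l] by simp
  have cpos: "real (card SS) > 0" using cSS assms(3) by simp
  have inner: "(\<Sum>S\<in>SS. if S \<subseteq> {1..<y} then c else 0) = c * real ((y - 1) choose l)"
    if y: "y \<in> {1..M}" for y and c :: real
  proof -
    have "(\<Sum>S\<in>SS. if S \<subseteq> {1..<y} then c else 0) = (\<Sum>S\<in>{S\<in>SS. S \<subseteq> {1..<y}}. c)"
      by (rule sum.inter_filter[symmetric]) (rule fin)
    also have "{S\<in>SS. S \<subseteq> {1..<y}} = {S. S \<subseteq> {1..<y} \<and> card S = l}"
      unfolding SS_def using y by auto
    finally have "(\<Sum>S\<in>SS. if S \<subseteq> {1..<y} then c else 0) = real (card {S. S \<subseteq> {1..<y} \<and> card S = l}) * c"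
      by simp
    moreover have "card {S. S \<subseteq> {1..<y} \<and> card S = l} = (y - 1) choose l"
      using n_subsets[of "{1..<y}" l] by simp
    ultimately show ?thesis by simp
  qed
  have "(\<Sum>S\<in>SS. (\<Sum>y=1..M. if S \<subseteq> {1..<y} then \<eta> * (1 - \<eta>) ^ (y - 1) else 0) + (1 - \<eta>) ^ M)
     = (\<Sum>y=1..M. \<Sum>S\<in>SS. if S \<subseteq> {1..<y} then \<eta> * (1 - \<eta>) ^ (y - 1) else 0) + real (card SS) * (1 - \<eta>) ^ M"
    by (simp add: sum.distrib sum.swap[of _ SS])
  also have "(\<Sum>y=1..M. \<Sum>S\<in>SS. if S \<subseteq> {1..<y} then \<eta> * (1 - \<eta>) ^ (y - 1) else 0)
       = (\<Sum>y=1..M. \<eta> * (1 - \<eta>) ^ (y - 1) * real ((y - 1) choose l))"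
    by (rule sum.cong[OF refl]) (rule inner)
  finally have "(\<Sum>S\<in>SS. (\<Sum>y=1..M. if S \<subseteq> {1..<y} then \<eta> * (1 - \<eta>) ^ (y - 1) else 0) + (1 - \<eta>) ^ M) / real (card SS)
     = (\<Sum>y=1..M. \<eta> * (1 - \<eta>) ^ (y - 1) * (real ((y - 1) choose l) / real (card SS))) + (1 - \<eta>) ^ M"
    using cpos by (simp add: add_divide_distrib sum_divide_distrib)
  also have "(\<Sum>y=1..M. \<eta> * (1 - \<eta>) ^ (y - 1) * (real ((y - 1) choose l) / real (card SS)))
     = (\<Sum>y=1..M. \<eta> * (1 - \<eta>) ^ (y - 1) * ratio M y l)"
  proof (rule sum.cong[OF refl])
    fix y assume "y \<in> {1..M}"
    hence "real ((y - 1) choose l) / real (card SS) = ratio M y l"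
      unfolding cSS ratio_def using assms(3) by (intro ratio_choose) auto
    thus "\<eta> * (1 - \<eta>) ^ (y - 1) * (real ((y - 1) choose l) / real (card SS)) = \<eta> * (1 - \<eta>) ^ (y - 1) * ratio M y l"
      by simp
  qed
  finally show ?thesis .
qed

theorem theorem1:
  fixes M E lmax :: nat and \<eta> :: real
    and phi :: "nat pmf" and Lam :: "nat \<Rightarrow> nat pmf"
    and \<Omega> :: "'w pmf" and X :: "'w \<Rightarrow> dev_outcome" and lost :: "'w \<Rightarrow> bool"
  assumes "M \<ge> 1" and "0 \<le> \<eta>" and "\<eta> \<le> 1" and "lmax \<le> M"
    and "set_pmf phi \<subseteq> {0..E}"
    and "\<And>b. b \<le> E \<Longrightarrow> set_pmf (Lam b) \<subseteq> {0..lmax}"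
    and "map_pmf X \<Omega> = device_pmf M \<eta> phi Lam"
    and "\<And>\<omega>. transmitted E M (X \<omega>) = {} \<Longrightarrow> lost \<omega>"
  shows "measure_pmf.prob \<Omega> {\<omega>. lost \<omega>} \<ge> Pe_lower M \<eta> lmax phi Lam"
proof -
  define G where "G = {x::dev_outcome. case x of (b, l, S, H) \<Rightarrow> b = 0 \<and> goodS M S H}"
  define PH where "PH = Pi_pmf {1..M} False (\<lambda>_. bernoulli_pmf \<eta>)"
  define SS where "SS = (\<lambda>l. {S. S \<subseteq> {1..M} \<and> card S = l})"
  define c where "c = (\<lambda>y::nat. \<eta> * (1 - \<eta>) ^ (y - 1))"
  define d where "d = (1 - \<eta>) ^ M"
  define F where "F = (\<lambda>b. bind_pmf (Lam b) (\<lambda>l.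
     bind_pmf (pmf_of_set (SS l)) (\<lambda>S. bind_pmf PH (\<lambda>H. return_pmf (b, l, S, H)))))"
  have dev: "device_pmf M \<eta> phi Lam = bind_pmf phi F"
    unfolding device_pmf_def F_def SS_def PH_def by simp
  have sub: "X -` G \<subseteq> {\<omega>. lost \<omega>}"
  proof
    fix \<omega> assume "\<omega> \<in> X -` G"
    then obtain l S H where "X \<omega> = (0, l, S, H)" "goodS M S H"
      unfolding G_def by (auto split: prod.splits)
    thus "\<omega> \<in> {\<omega>. lost \<omega>}" using assms(8) good_transmitted by auto
  qed
  have "measure_pmf.prob \<Omega> (X -` G) \<le> measure_pmf.prob \<Omega> {\<omega>. lost \<omega>}"
    by (rule measure_pmf.finite_measure_mono[OF sub]) simp
  moreover have "measure_pmf.prob \<Omega> (X -` G) = measure_pmf.prob (bind_pmf phi F) G"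
    using assms(7) dev by (metis measure_map_pmf)
  moreover have "measure_pmf.prob (bind_pmf phi F) G \<ge> pmf phi 0 * measure_pmf.prob (F 0) G"
  proof -
    have "measure_pmf.prob (bind_pmf phi F) G = (\<Sum>b\<in>{0..E}. pmf phi b * measure_pmf.prob (F b) G)"
      by (subst measure_bind_pmf_int, subst integral_measure_pmf[of "{0..E}"]) (use assms(5) in auto)
    also have "\<dots> \<ge> pmf phi 0 * measure_pmf.prob (F 0) G"
      by (rule member_le_sum[where f = "\<lambda>b. pmf phi b * measure_pmf.prob (F b) G"]) auto
    finally show ?thesis .
  qed
  moreover have "measure_pmf.prob (F 0) G = (\<Sum>y=1..M. c y * (\<Sum>l=0..lmax. pmf (Lam 0) l * ratio M y l)) + d"
  proof -
    have Fl: "measure_pmf.prob (bind_pmf (pmf_of_set (SS l)) (\<lambda>S. bind_pmf PH (\<lambda>H. return_pmf (0, l, S, H)))) G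
        = (\<Sum>y=1..M. c y * ratio M y l) + d" if l: "l \<in> {0..lmax}" for l
    proof -
      have lM: "l \<le> M" using l assms(4) by simp
      have fin: "finite (SS l)" unfolding SS_def by (rule finite_subset[of _ "Pow {1..M}"]) auto
      have ne: "SS l \<noteq> {}"
      proof -
        have "card (SS l) = M choose l" unfolding SS_def using n_subsets[of "{1..M}" l] by simp
        thus ?thesis using lM by auto
      qed
      have inS: "measure_pmf.prob (bind_pmf PH (\<lambda>H. return_pmf (0, l, S, H))) G
           = (\<Sum>y=1..M. if S \<subseteq> {1..<y} then c y else 0) + d" for S
      proof -
        have bm: "bind_pmf PH (\<lambda>H. return_pmf (0, l, S, H)) = map_pmf (\<lambda>H. (0, l, S, H)) PH"
          by (simp add: map_pmf_def)
        have "measure_pmf.prob (bind_pmf PH (\<lambda>H. return_pmf (0, l, S, H))) G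
             = measure_pmf.prob PH ((\<lambda>H. (0::nat, l, S, H)) -` G)"
          unfolding bm by (rule measure_map_pmf)
        also have "(\<lambda>H. (0::nat, l, S, H)) -` G = {H. goodS M S H}" unfolding G_def by auto
        also have "measure_pmf.prob PH {H. goodS M S H} = (\<Sum>y=1..M. if S \<subseteq> {1..<y} then c y else 0) + d"
          unfolding c_def d_def PH_def by (rule measure_good[OF assms(2,3)])
        finally show ?thesis .
      qed
      have "measure_pmf.prob (bind_pmf (pmf_of_set (SS l)) (\<lambda>S. bind_pmf PH (\<lambda>H. return_pmf (0, l, S, H)))) G
          = (\<integral>S. measure_pmf.prob (bind_pmf PH (\<lambda>H. return_pmf (0, l, S, H))) G \<partial>pmf_of_set (SS l))"
        by (rule measure_bind_pmf_int)
      also have "\<dots> = (\<Sum>S\<in>SS l. measure_pmf.prob (bind_pmf PH (\<lambda>H. return_pmf (0, l, S, H))) G) / real (card (SS l))"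
        by (rule integral_pmf_of_set[OF ne fin])
      also have "\<dots> = (\<Sum>S\<in>SS l. (\<Sum>y=1..M. if S \<subseteq> {1..<y} then c y else 0) + d) / real (card (SS l))"
        unfolding inS ..
      also have "\<dots> = (\<Sum>y=1..M. c y * ratio M y l) + d"
        using measure_l[OF assms(2,3) lM] unfolding SS_def c_def d_def by simp
      finally show ?thesis .
    qed
    have "measure_pmf.prob (F 0) G = (\<Sum>l\<in>{0..lmax}. pmf (Lam 0) l * ((\<Sum>y=1..M. c y * ratio M y l) + d))"
      unfolding F_def
      by (subst measure_bind_pmf_int, subst integral_measure_pmf[of "{0..lmax}"]) (use assms(6)[of 0] Fl in auto)
    also have "\<dots> = (\<Sum>y=1..M. c y * (\<Sum>l=0..lmax. pmf (Lam 0) l * ratio M y l))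
        + d * (\<Sum>l=0..lmax. pmf (Lam 0) l)"
      by (simp add: algebra_simps sum.distrib sum_distrib_left sum_distrib_right sum.swap[of _ "{0..lmax}"])
    also have "(\<Sum>l=0..lmax. pmf (Lam 0) l) = 1"
      by (rule sum_pmf_eq_1) (use assms(6)[of 0] in auto)
    finally show ?thesis by simp
  qed
  ultimately show ?thesis
    unfolding Pe_lower_def c_def d_def by (simp add: sum_distrib_left)
qed

end
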